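(* Let $m\ge 3$ and let $T_m$ be the graph defined below. The multiplicity of $1$ as an eigenvalue of $T_m$ equals the number of pairs $(j,\ell)\in\{0,\dots,m-1\}^2$ satisfying \[ \cos\tfrac{2\pi j}{m}+\cos\tfrac{2\pi \ell}{m}=2\cos\tfrac{2\pi j}{m}\cos\tfrac{2\pi \ell}{m}. \]
   Context: For $m\ge3$, $T_m$ is the cubic graph on $2m^2$ vertices $\{x^+_{i,j},\,x^-_{i,j}\mid i,j\in\mathbb{Z}_m\}$ with edges $\{x^+_{i,j},x^+_{i,j+1}\}$, $\{x^-_{i,j},x^-_{i,j+1}\}$ and $\{x^+_{i,j},x^-_{j,i}\}$ for all $i,j\in\mathbb{Z}_m$. Eigenvalues are those of the adjacency matrix. *)

theory Defs
  imports Complex_Main "Jordan_Normal_Form.Char_Poly"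
begin

text \<open>Vertices of T_m are encoded as natural numbers below 2*m*m:
  x^+_{i,j} is i*m+j and x^-_{i,j} is m*m+i*m+j (i, j < m).\<close>

definition Tp :: "nat \<Rightarrow> nat \<Rightarrow> nat \<Rightarrow> nat" where
  "Tp m i j = i * m + j"

definition Tn :: "nat \<Rightarrow> nat \<Rightarrow> nat \<Rightarrow> nat" where
  "Tn m i j = m * m + i * m + j"

definition T_edge :: "nat \<Rightarrow> nat \<Rightarrow> nat \<Rightarrow> bool" where
  "T_edge m u v \<longleftrightarrow> (\<exists>i<m. \<exists>j<m.
      (u = Tp m i j \<and> v = Tp m i ((j + 1) mod m)) \<or>
      (u = Tn m i j \<and> v = Tn m i ((j + 1) mod m)) \<or>
      (u = Tp m i j \<and> v = Tn m j i))"

definition T_adj :: "nat \<Rightarrow> nat \<Rightarrow> nat \<Rightarrow> bool" where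
  "T_adj m u v \<longleftrightarrow> T_edge m u v \<or> T_edge m v u"

definition T_adjacency_matrix :: "nat \<Rightarrow> real mat" where
  "T_adjacency_matrix m = mat (2 * m * m) (2 * m * m) (\<lambda>(u, v). if T_adj m u v then 1 else 0)"

definition eigenvalue_multiplicity :: "real mat \<Rightarrow> real \<Rightarrow> nat" where
  "eigenvalue_multiplicity A c = order c (char_poly A)"

end

theory Submission
  imports Defs
begin

definition ww :: "nat \<Rightarrow> complex" where "ww n = cis (2*pi / real n)"

lemma ww_pow: "ww n ^ k = cis (2*pi*real k / real n)"
  by (simp add: ww_def DeMoivre field_simps)

lemma ww_pow_n: "n > 0 \<Longrightarrow> ww n ^ n = 1"
proof -
  assume "n > 0"
  then have "2*pi*real n / real n = 2*pi*real (1::nat)" by simp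
  then show ?thesis unfolding ww_pow by (metis cis_multiple_2pi Ints_of_nat)
qed

lemma ww_pow_mod: assumes "n > 0" shows "ww n ^ (k mod n) = ww n ^ k"
proof -
  have "ww n ^ k = ww n ^ (n * (k div n) + k mod n)" by (metis mult_div_mod_eq)
  also have "\<dots> = ww n ^ (k mod n)" by (simp only: power_add power_mult ww_pow_n[OF assms] power_one mult_1)
  finally show ?thesis by simp
qed

lemma ww_pow_cong: "n > 0 \<Longrightarrow> x mod n = y mod n \<Longrightarrow> ww n ^ x = ww n ^ y"
  by (metis ww_pow_mod)

lemma ww_pow_eq_1: assumes "n > 0" "ww n ^ k = 1" shows "n dvd k"
proof -
  have "cos (2*pi*real k / real n) = 1" using assms(2) unfolding ww_pow
    by (metis complex.sel(1) cis.sel(1) one_complex.sel(1))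
  then obtain t :: int where t: "2*pi*real k / real n = t * 2 * pi" by (auto simp: cos_one_2pi_int)
  then have "real k = t * real n" using assms(1) by (simp add: field_simps)
  then have "int k = t * int n" by (metis of_int_eq_iff of_int_mult of_int_of_nat_eq)
  then show ?thesis by (metis dvd_triv_right int_dvd_int_iff mult.commute)
qed

lemma sum_split_add: fixes k l :: nat shows "(\<Sum>v<k+l. f v) = (\<Sum>v<k. f v) + (\<Sum>v<l. f (k+v))"
proof -
  have "x \<in> (\<lambda>v. k+v) ` {..<l}" if "x<k+l" "\<not> x<k" for x
    using that by (intro image_eqI[of x _ "x-k"]) auto
  then have "{..<k+l} = {..<k} \<union> (\<lambda>v. k+v) ` {..<l}" by auto
  moreover have "sum f ({..<k} \<union> (+) k ` {..<l}) = sum f {..<k} + sum f ((+) k ` {..<l})"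
    by (rule sum.union_disjoint) auto
  moreover have "sum f ((+) k ` {..<l}) = (\<Sum>v<l. f (k+v))" by (simp add: sum.reindex)
  ultimately show ?thesis by simp
qed

lemma sum_split_mult: fixes k n :: nat shows "(\<Sum>v<k*n. f v) = (\<Sum>i<k. \<Sum>j<n. f (i*n+j))"
proof (induction k)
  case 0 then show ?case by simp
next
  case (Suc k)
  have "(\<Sum>v<Suc k*n. f v) = (\<Sum>v<k*n. f v) + (\<Sum>j<n. f (k*n+j))"
    using sum_split_add[where k="k*n" and l=n and f=f] by (simp add: add.commute)
  then show ?case using Suc by simp
qed

definition bet :: "nat \<Rightarrow> nat \<Rightarrow> real" where "bet n a = 2 * cos (2*pi*real a / real n)"

lemma ww_pow_inv: assumes "n > 0" shows "ww n ^ ((n-1)*b) = cis (- (2*pi*real b / real n))"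
proof -
  have e: "(n-1)*b + b = n*b" using assms by (cases n) auto
  have "ww n ^ ((n-1)*b) * ww n ^ b = ww n ^ (n*b)" by (simp only: power_add[symmetric] e)
  also have "\<dots> = 1" by (simp add: power_mult ww_pow_n assms)
  finally have "ww n ^ ((n-1)*b) * ww n ^ b = 1" .
  then have "ww n ^ ((n-1)*b) = inverse (ww n ^ b)" by (metis inverse_unique mult.commute)
  then show ?thesis by (simp add: ww_pow cis_inverse)
qed

lemma bet_eq: assumes "n > 0" shows "complex_of_real (bet n b) = ww n ^ b + ww n ^ ((n-1)*b)"
proof -
  have "ww n ^ b + ww n ^ ((n-1)*b) = cis (2*pi*real b / real n) + cis (- (2*pi*real b / real n))"
    using ww_pow_inv[OF assms, of b] ww_pow[of n b] by simp
  then show ?thesis by (simp add: bet_def complex_eq_iff)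
qed

lemma orth1: assumes "n > 0" "a < n" "a' < n"
  shows "(\<Sum>i<n. ww n ^ ((n-1)*(a*i)) * ww n ^ (a'*i)) = (if a = a' then of_nat n else 0)"
proof -
  let ?z = "ww n ^ ((n-1)*a + a')"
  have eq: "ww n ^ ((n-1)*(a*i)) * ww n ^ (a'*i) = ?z ^ i" for i
    by (simp add: power_add[symmetric] power_mult[symmetric] algebra_simps)
  show ?thesis
  proof (cases "a = a'")
    case True
    have e: "(n-1)*a + a' = n*a" using True assms by (cases n) auto
    have "?z = 1" unfolding e by (simp add: power_mult ww_pow_n assms)
    then show ?thesis using True eq by simp
  next
    case False
    have zn: "?z ^ n = 1" by (simp add: power_mult[symmetric] mult.commute[of _ n] power_mult ww_pow_n assms)
    have "?z \<noteq> 1"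
    proof
      assume "?z = 1"
      then have d: "n dvd (n-1)*a + a'" using ww_pow_eq_1 assms by blast
      have e: "(n-1)*a + a' + a = n*a + a'" using assms by (cases n) auto
      have "int ((n-1)*a + a') = int n * int a + (int a' - int a)" using arg_cong[OF e, of int] by simp
      then have "int n dvd int a' - int a" using d
        by (metis dvd_add_right_iff dvd_triv_left int_dvd_int_iff)
      moreover have "int a' - int a \<noteq> 0" using False by simp
      ultimately have "\<bar>int n\<bar> \<le> \<bar>int a' - int a\<bar>" using dvd_imp_le_int by blast
      then show False using assms by simp
    qed
    then have "(\<Sum>i<n. ?z ^ i) = 0" using zn by (simp add: geometric_sum)
    then show ?thesis using eq False by simp
  qed
qed



lemma Tp_inj: "j < n \<Longrightarrow> j' < n \<Longrightarrow> Tp n i j = Tp n i' j' \<longleftrightarrow> i = i' \<and> j = j'"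
proof -
  assume a: "j < n" "j' < n"
  have "(i*n+j) div n = i" "(i*n+j) mod n = j" "(i'*n+j') div n = i'" "(i'*n+j') mod n = j'" using a by auto
  then show ?thesis unfolding Tp_def by metis
qed

lemma Tn_eq: "Tn n i j = n*n + Tp n i j" unfolding Tn_def Tp_def by simp

lemma Tn_inj: "j < n \<Longrightarrow> j' < n \<Longrightarrow> Tn n i j = Tn n i' j' \<longleftrightarrow> i = i' \<and> j = j'"
  using Tp_inj[of j n j' i i'] unfolding Tn_eq by simp

lemma Tp_lt: "i < n \<Longrightarrow> j < n \<Longrightarrow> Tp n i j < n*n"
proof -
  assume "i < n" "j < n"
  then have "i*n + j < i*n + n" by simp
  also have "\<dots> = (i+1)*n" by simp
  also have "\<dots> \<le> n*n" using \<open>i<n\<close> mult_le_mono1[of "i+1" n n] by simp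
  finally show ?thesis unfolding Tp_def .
qed


lemma Tp_ne_Tn: "i < n \<Longrightarrow> j < n \<Longrightarrow> Tp n i j \<noteq> Tn n i' j'"
  using Tp_lt[of i n j] unfolding Tn_eq by simp

lemma succ_mod_iff: fixes j j' n :: nat assumes "j < n" "j' < n"
  shows "(j'+1) mod n = j \<longleftrightarrow> j' = (j+n-1) mod n"
proof -
  have a: "(j'+1) mod n = (if j'+1 = n then 0 else j'+1)" using assms by auto
  have b: "(j+n-1) mod n = (if j = 0 then n-1 else j-1)"
  proof (cases "j = 0")
    case True then show ?thesis using assms by simp
  next
    case False
    then have e: "j+n-1 = (j-1) + n" by simp
    show ?thesis using False assms by (simp only: e mod_add_self2) simp
  qed
  show ?thesis unfolding a b using assms by auto
qed


lemma edge_Tp_out: assumes "i < n" "j < n"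
  shows "T_edge n (Tp n i j) u \<longleftrightarrow> u = Tp n i ((j+1) mod n) \<or> u = Tn n j i"
proof
  assume "T_edge n (Tp n i j) u"
  then obtain i' j' where ij: "i' < n" "j' < n" and
    c: "(Tp n i j = Tp n i' j' \<and> u = Tp n i' ((j' + 1) mod n)) \<or>
      (Tp n i j = Tn n i' j' \<and> u = Tn n i' ((j' + 1) mod n)) \<or>
      (Tp n i j = Tp n i' j' \<and> u = Tn n j' i')" unfolding T_edge_def by blast
  show "u = Tp n i ((j+1) mod n) \<or> u = Tn n j i"
    using c Tp_inj[OF assms(2) ij(2)] Tp_ne_Tn[OF assms] by auto
next
  assume "u = Tp n i ((j+1) mod n) \<or> u = Tn n j i"
  then show "T_edge n (Tp n i j) u" unfolding T_edge_def using assms by blast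
qed

lemma edge_Tp_in: assumes "i < n" "j < n"
  shows "T_edge n u (Tp n i j) \<longleftrightarrow> u = Tp n i ((j+n-1) mod n)"
proof
  assume "T_edge n u (Tp n i j)"
  then obtain i' j' where ij: "i' < n" "j' < n" and
    c: "(u = Tp n i' j' \<and> Tp n i j = Tp n i' ((j' + 1) mod n)) \<or>
      (u = Tn n i' j' \<and> Tp n i j = Tn n i' ((j' + 1) mod n)) \<or>
      (u = Tp n i' j' \<and> Tp n i j = Tn n j' i')" unfolding T_edge_def by blast
  have m: "(j'+1) mod n < n" using ij by simp
  show "u = Tp n i ((j+n-1) mod n)"
    using c Tp_inj[OF assms(2) m] Tp_ne_Tn[OF assms] succ_mod_iff[OF assms(2) ij(2)] by auto
next
  assume u: "u = Tp n i ((j+n-1) mod n)"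
  have "(((j+n-1) mod n) + 1) mod n = j" using succ_mod_iff[of j n "(j+n-1) mod n"] assms by simp
  then show "T_edge n u (Tp n i j)" unfolding T_edge_def using assms u
    by (intro exI[of _ i] conjI exI[of _ "(j+n-1) mod n"]) auto
qed

lemma edge_Tn_out: assumes "i < n" "j < n"
  shows "T_edge n (Tn n i j) u \<longleftrightarrow> u = Tn n i ((j+1) mod n)"
proof
  assume "T_edge n (Tn n i j) u"
  then obtain i' j' where ij: "i' < n" "j' < n" and
    c: "(Tn n i j = Tp n i' j' \<and> u = Tp n i' ((j' + 1) mod n)) \<or>
      (Tn n i j = Tn n i' j' \<and> u = Tn n i' ((j' + 1) mod n)) \<or>
      (Tn n i j = Tp n i' j' \<and> u = Tn n j' i')" unfolding T_edge_def by blast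
  show "u = Tn n i ((j+1) mod n)"
    using c Tn_inj[OF assms(2) ij(2)] Tp_ne_Tn[OF ij(1) ij(2), of i j] by auto
next
  assume "u = Tn n i ((j+1) mod n)"
  then show "T_edge n (Tn n i j) u" unfolding T_edge_def using assms by blast
qed

lemma edge_Tn_in: assumes "i < n" "j < n"
  shows "T_edge n u (Tn n i j) \<longleftrightarrow> u = Tn n i ((j+n-1) mod n) \<or> u = Tp n j i"
proof
  assume "T_edge n u (Tn n i j)"
  then obtain i' j' where ij: "i' < n" "j' < n" and
    c: "(u = Tp n i' j' \<and> Tn n i j = Tp n i' ((j' + 1) mod n)) \<or>
      (u = Tn n i' j' \<and> Tn n i j = Tn n i' ((j' + 1) mod n)) \<or>
      (u = Tp n i' j' \<and> Tn n i j = Tn n j' i')" unfolding T_edge_def by blast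
  have m: "(j'+1) mod n < n" using ij by simp
  show "u = Tn n i ((j+n-1) mod n) \<or> u = Tp n j i"
    using c Tn_inj[OF assms(2) m] Tn_inj[OF assms(2) ij(1)] Tp_ne_Tn[OF ij(1) m, of i j]
      succ_mod_iff[OF assms(2) ij(2)] by auto
next
  assume u: "u = Tn n i ((j+n-1) mod n) \<or> u = Tp n j i"
  have "(((j+n-1) mod n) + 1) mod n = j" using succ_mod_iff[of j n "(j+n-1) mod n"] assms by simp
  then have "\<exists>i'<n. \<exists>j'<n. u = Tn n i' j' \<and> Tn n i j = Tn n i' ((j' + 1) mod n)"
    if "u = Tn n i ((j+n-1) mod n)" using that assms
    by (intro exI[of _ i] conjI exI[of _ "(j+n-1) mod n"]) auto
  moreover have "\<exists>i'<n. \<exists>j'<n. u = Tp n i' j' \<and> Tn n i j = Tn n j' i'"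
    if "u = Tp n j i" using that assms by blast
  ultimately show "T_edge n u (Tn n i j)" unfolding T_edge_def using u by blast
qed


lemma succ_mod_if: fixes j n :: nat shows "j < n \<Longrightarrow> (j+1) mod n = (if j+1 = n then 0 else j+1)"
  by auto

lemma pred_mod_if: fixes j n :: nat assumes "j < n" shows "(j+n-1) mod n = (if j = 0 then n-1 else j-1)"
proof (cases "j = 0")
  case True then show ?thesis using assms by simp
next
  case False
  then have e: "j+n-1 = (j-1) + n" by simp
  show ?thesis using False assms by (simp only: e mod_add_self2) simp
qed

lemma succ_ne_pred: fixes j n :: nat assumes "j < n" "n \<ge> 3" shows "(j+1) mod n \<noteq> (j+n-1) mod n"
  unfolding succ_mod_if[OF assms(1)] pred_mod_if[OF assms(1)] using assms by auto

lemma Tp_lt2: "i < n \<Longrightarrow> j < n \<Longrightarrow> Tp n i j < 2*n*n" using Tp_lt[of i n j] by simp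
lemma Tn_lt2: "i < n \<Longrightarrow> j < n \<Longrightarrow> Tn n i j < 2*n*n" using Tp_lt[of i n j] unfolding Tn_eq by simp

lemma adj_Tp_set: assumes "i < n" "j < n"
  shows "{u \<in> {..<2*n*n}. T_adj n (Tp n i j) u} = {Tp n i ((j+1) mod n), Tp n i ((j+n-1) mod n), Tn n j i}"
proof -
  have m: "(j+1) mod n < n" "(j+n-1) mod n < n" using assms by auto
  show ?thesis unfolding T_adj_def edge_Tp_out[OF assms] edge_Tp_in[OF assms]
    using Tp_lt2[OF assms(1) m(1)] Tp_lt2[OF assms(1) m(2)] Tn_lt2[OF assms(2) assms(1)] by auto
qed

lemma adj_Tn_set: assumes "i < n" "j < n"
  shows "{u \<in> {..<2*n*n}. T_adj n (Tn n i j) u} = {Tn n i ((j+1) mod n), Tn n i ((j+n-1) mod n), Tp n j i}"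
proof -
  have m: "(j+1) mod n < n" "(j+n-1) mod n < n" using assms by auto
  show ?thesis unfolding T_adj_def edge_Tn_out[OF assms] edge_Tn_in[OF assms]
    using Tn_lt2[OF assms(1) m(1)] Tn_lt2[OF assms(1) m(2)] Tp_lt2[OF assms(2) assms(1)] by auto
qed

lemma sum_adj_Tp: assumes "i < n" "j < n" "n \<ge> 3"
  shows "(\<Sum>u<2*n*n. if T_adj n (Tp n i j) u then f u else 0) =
     f (Tp n i ((j+1) mod n)) + f (Tp n i ((j+n-1) mod n)) + f (Tn n j i)"
proof -
  have m: "(j+1) mod n < n" "(j+n-1) mod n < n" using assms by auto
  have "(\<Sum>u<2*n*n. if T_adj n (Tp n i j) u then f u else 0) = (\<Sum>u\<in>{u \<in> {..<2*n*n}. T_adj n (Tp n i j) u}. f u)"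
    by (rule sum.inter_filter[symmetric]) simp
  also have "\<dots> = (\<Sum>u\<in>{Tp n i ((j+1) mod n), Tp n i ((j+n-1) mod n), Tn n j i}. f u)"
    unfolding adj_Tp_set[OF assms(1,2)] ..
  also have "\<dots> = f (Tp n i ((j+1) mod n)) + f (Tp n i ((j+n-1) mod n)) + f (Tn n j i)"
    using Tp_inj[OF m] succ_ne_pred[OF assms(2,3)] Tp_ne_Tn[OF assms(1) m(1)] Tp_ne_Tn[OF assms(1) m(2)]
    by (simp add: add.assoc)
  finally show ?thesis .
qed

lemma sum_adj_Tn: assumes "i < n" "j < n" "n \<ge> 3"
  shows "(\<Sum>u<2*n*n. if T_adj n (Tn n i j) u then f u else 0) =
     f (Tn n i ((j+1) mod n)) + f (Tn n i ((j+n-1) mod n)) + f (Tp n j i)"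
proof -
  have m: "(j+1) mod n < n" "(j+n-1) mod n < n" using assms by auto
  have "(\<Sum>u<2*n*n. if T_adj n (Tn n i j) u then f u else 0) = (\<Sum>u\<in>{u \<in> {..<2*n*n}. T_adj n (Tn n i j) u}. f u)"
    by (rule sum.inter_filter[symmetric]) simp
  also have "\<dots> = (\<Sum>u\<in>{Tn n i ((j+1) mod n), Tn n i ((j+n-1) mod n), Tp n j i}. f u)"
    unfolding adj_Tn_set[OF assms(1,2)] ..
  also have "\<dots> = f (Tn n i ((j+1) mod n)) + f (Tn n i ((j+n-1) mod n)) + f (Tp n j i)"
    using Tn_inj[OF m] succ_ne_pred[OF assms(2,3)] Tp_ne_Tn[OF assms(2) assms(1), of i "(j+1) mod n"]
       Tp_ne_Tn[OF assms(2) assms(1), of i "(j+n-1) mod n"]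
    by (simp add: add.assoc)
  finally show ?thesis .
qed


definition Pcol :: "nat \<Rightarrow> nat \<Rightarrow> nat \<Rightarrow> real \<Rightarrow> nat \<Rightarrow> complex" where
  "Pcol n a b l v = (if v < n*n then ww n ^ (a*(v div n) + b*(v mod n))
     else complex_of_real (l - bet n b) * ww n ^ (b*((v-n*n) div n) + a*((v-n*n) mod n)))"

lemma Tp_div: "j < n \<Longrightarrow> Tp n i j div n = i" unfolding Tp_def by simp
lemma Tp_mod: "j < n \<Longrightarrow> Tp n i j mod n = j" unfolding Tp_def by simp

lemma Pcol_Tp: "i < n \<Longrightarrow> j < n \<Longrightarrow> Pcol n a b l (Tp n i j) = ww n ^ (a*i+b*j)"
  unfolding Pcol_def using Tp_lt[of i n j] Tp_div[of j n i] Tp_mod[of j n i] by (simp only: if_True)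

lemma Pcol_Tn: "i < n \<Longrightarrow> j < n \<Longrightarrow> Pcol n a b l (Tn n i j) = complex_of_real (l - bet n b) * ww n ^ (b*i+a*j)"
proof -
  assume a: "i < n" "j < n"
  have "\<not> Tn n i j < n*n" "Tn n i j - n*n = Tp n i j" unfolding Tn_eq by auto
  then show ?thesis unfolding Pcol_def using Tp_div[of j n i] Tp_mod[of j n i] a by (simp only: if_False)
qed
lemma decomp: fixes v n :: nat assumes "v < 2*n*n"
  obtains i j where "i < n" "j < n" "v = Tp n i j" | i j where "i < n" "j < n" "v = Tn n i j"
proof (cases "v < n*n")
  case True
  have n0: "n > 0" using True by (cases n) auto
  have "v div n < n" using True less_mult_imp_div_less by blast
  moreover have "v mod n < n" using n0 by simp
  moreover have "v = Tp n (v div n) (v mod n)" unfolding Tp_def by simp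
  ultimately show ?thesis using that(1) by blast
next
  case False
  have w: "v - n*n < n*n" using assms False by simp
  have n0: "n > 0" using w by (cases n) auto
  have "(v-n*n) div n < n" using w less_mult_imp_div_less by blast
  moreover have "(v-n*n) mod n < n" using n0 by simp
  moreover have "v = Tn n ((v-n*n) div n) ((v-n*n) mod n)" unfolding Tn_def using False by simp
  ultimately show ?thesis using that(2) by blast
qed

lemma ww_succ: assumes "n > 0" shows "ww n ^ (x + b*((j+1) mod n)) = ww n ^ (x + b*j) * ww n ^ b"
proof -
  have "(x + b*((j+1) mod n)) mod n = (x + b*(j+1)) mod n"
    by (metis mod_add_right_eq mod_mult_right_eq)
  then have "(x + b*((j+1) mod n)) mod n = (x + b*j + b) mod n" by (simp add: algebra_simps)
  then show ?thesis using ww_pow_cong[OF assms] by (metis power_add)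
qed

lemma ww_pred: assumes "n > 0" shows "ww n ^ (x + b*((j+n-1) mod n)) = ww n ^ (x + b*j) * ww n ^ ((n-1)*b)"
proof -
  have e: "j+n-1 = j + (n-1)" using assms by simp
  have "(x + b*((j+n-1) mod n)) mod n = (x + b*(j+(n-1))) mod n" unfolding e
    by (metis mod_add_right_eq mod_mult_right_eq)
  then have "(x + b*((j+n-1) mod n)) mod n = (x + b*j + (n-1)*b) mod n" by (simp add: algebra_simps)
  then show ?thesis using ww_pow_cong[OF assms] by (metis power_add)
qed

lemma eigen_Pcol: assumes n: "n \<ge> 3" and ab: "a < n" "b < n" and l: "(l - bet n a) * (l - bet n b) = 1"
  and v: "v < 2*n*n"
  shows "(\<Sum>u<2*n*n. if T_adj n v u then Pcol n a b l u else 0) = complex_of_real l * Pcol n a b l v"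
proof -
  have n0: "n > 0" using n by simp
  from v show ?thesis
  proof (cases rule: decomp)
    case (1 i j)
    have m: "(j+1) mod n < n" "(j+n-1) mod n < n" using 1 by auto
    let ?X = "ww n ^ (a*i + b*j)"
    have "(\<Sum>u<2*n*n. if T_adj n v u then Pcol n a b l u else 0)
       = Pcol n a b l (Tp n i ((j+1) mod n)) + Pcol n a b l (Tp n i ((j+n-1) mod n)) + Pcol n a b l (Tn n j i)"
      unfolding 1(3) by (rule sum_adj_Tp[OF 1(1,2) n])
    also have "\<dots> = ?X * ww n ^ b + ?X * ww n ^ ((n-1)*b) + complex_of_real (l - bet n b) * ?X"
      unfolding Pcol_Tp[OF 1(1) m(1)] Pcol_Tp[OF 1(1) m(2)] Pcol_Tn[OF 1(2,1)]
        ww_succ[OF n0] ww_pred[OF n0] by (simp add: add.commute mult.commute)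
    also have "\<dots> = ?X * (ww n ^ b + ww n ^ ((n-1)*b)) + complex_of_real (l - bet n b) * ?X"
      by (simp add: distrib_left)
    also have "\<dots> = complex_of_real l * ?X"
      unfolding bet_eq[OF n0, symmetric] by (simp add: algebra_simps)
    finally show ?thesis unfolding 1(3) Pcol_Tp[OF 1(1,2)] .
  next
    case (2 i j)
    have m: "(j+1) mod n < n" "(j+n-1) mod n < n" using 2 by auto
    let ?X = "ww n ^ (b*i + a*j)"
    let ?c = "complex_of_real (l - bet n b)"
    have "(\<Sum>u<2*n*n. if T_adj n v u then Pcol n a b l u else 0)
       = Pcol n a b l (Tn n i ((j+1) mod n)) + Pcol n a b l (Tn n i ((j+n-1) mod n)) + Pcol n a b l (Tp n j i)"
      unfolding 2(3) by (rule sum_adj_Tn[OF 2(1,2) n])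
    also have "\<dots> = ?c * (?X * ww n ^ a) + ?c * (?X * ww n ^ ((n-1)*a)) + ?X"
      unfolding Pcol_Tn[OF 2(1) m(1)] Pcol_Tn[OF 2(1) m(2)] Pcol_Tp[OF 2(2,1)]
        ww_succ[OF n0] ww_pred[OF n0] by (simp add: add.commute mult.commute)
    also have "\<dots> = ?c * ?X * (ww n ^ a + ww n ^ ((n-1)*a)) + ?X"
      by (simp add: distrib_left mult.assoc)
    also have "\<dots> = complex_of_real ((l - bet n b) * bet n a + 1) * ?X"
      unfolding bet_eq[OF n0, symmetric] by (simp add: algebra_simps)
    also have "(l - bet n b) * bet n a + 1 = l * (l - bet n b)" using l by (simp add: algebra_simps)
    finally show ?thesis unfolding 2(3) Pcol_Tn[OF 2(1,2)] by (simp add: algebra_simps)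
  qed
qed

definition Qrow :: "nat \<Rightarrow> nat \<Rightarrow> nat \<Rightarrow> complex \<Rightarrow> complex \<Rightarrow> nat \<Rightarrow> complex" where
  "Qrow n a b x y v = (if v < n*n then x * ww n ^ ((n-1)*(a*(v div n) + b*(v mod n)))
     else y * ww n ^ ((n-1)*(b*((v-n*n) div n) + a*((v-n*n) mod n))))"

lemma Qrow_Tp: "i < n \<Longrightarrow> j < n \<Longrightarrow> Qrow n a b x y (Tp n i j) = x * ww n ^ ((n-1)*(a*i+b*j))"
  unfolding Qrow_def using Tp_lt[of i n j] Tp_div[of j n i] Tp_mod[of j n i] by (simp only: if_True)

lemma Qrow_Tn: "i < n \<Longrightarrow> j < n \<Longrightarrow> Qrow n a b x y (Tn n i j) = y * ww n ^ ((n-1)*(b*i+a*j))"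
proof -
  assume a: "i < n" "j < n"
  have "\<not> Tn n i j < n*n" "Tn n i j - n*n = Tp n i j" unfolding Tn_eq by auto
  then show ?thesis unfolding Qrow_def using Tp_div[of j n i] Tp_mod[of j n i] a by (simp only: if_False)
qed

lemma sum_TpTn: fixes f :: "nat \<Rightarrow> 'a::comm_monoid_add"
  shows "(\<Sum>v<2*n*n. f v) = (\<Sum>i<n. \<Sum>j<n. f (Tp n i j)) + (\<Sum>i<n. \<Sum>j<n. f (Tn n i j))"
proof -
  have "(\<Sum>v<2*n*n. f v) = (\<Sum>v<n*n. f v) + (\<Sum>v<n*n. f (n*n+v))"
  proof -
    have e: "2*n*n = n*n+n*n" by simp
    show ?thesis unfolding e by (rule sum_split_add)
  qed
  then show ?thesis unfolding sum_split_mult Tn_def Tp_def by (simp add: add.assoc)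
qed

lemma orth: assumes n0: "n > 0" and ab: "a < n" "b < n" "a' < n" "b' < n"
  shows "(\<Sum>v<2*n*n. Qrow n a b x y v * Pcol n a' b' l v) =
    (if a = a' \<and> b = b' then of_nat (n*n) * (x + y * complex_of_real (l - bet n b)) else 0)"
proof -
  let ?g = "\<lambda>a a' i. ww n ^ ((n-1)*(a*i)) * ww n ^ (a'*i)"
  have t1: "Qrow n a b x y (Tp n i j) * Pcol n a' b' l (Tp n i j) = x * (?g a a' i * ?g b b' j)"
    if "i < n" "j < n" for i j
    unfolding Qrow_Tp[OF that] Pcol_Tp[OF that] by (simp add: algebra_simps power_add)
  have t2: "Qrow n a b x y (Tn n i j) * Pcol n a' b' l (Tn n i j) =
       y * complex_of_real (l - bet n b') * (?g b b' i * ?g a a' j)"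
    if "i < n" "j < n" for i j
    unfolding Qrow_Tn[OF that] Pcol_Tn[OF that] by (simp add: algebra_simps power_add)
  have "(\<Sum>v<2*n*n. Qrow n a b x y v * Pcol n a' b' l v) =
     (\<Sum>i<n. \<Sum>j<n. x * (?g a a' i * ?g b b' j)) +
     (\<Sum>i<n. \<Sum>j<n. y * complex_of_real (l - bet n b') * (?g b b' i * ?g a a' j))"
    unfolding sum_TpTn by (simp add: t1 t2)
  also have "\<dots> = x * ((\<Sum>i<n. ?g a a' i) * (\<Sum>j<n. ?g b b' j)) +
      y * complex_of_real (l - bet n b') * ((\<Sum>i<n. ?g b b' i) * (\<Sum>j<n. ?g a a' j))"
    by (simp only: sum_product sum_distrib_left[symmetric])
  also have "\<dots> = (if a = a' \<and> b = b' then of_nat (n*n) * (x + y * complex_of_real (l - bet n b)) else 0)"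
    unfolding orth1[OF n0 ab(1) ab(3)] orth1[OF n0 ab(2) ab(4)] by (simp add: algebra_simps)
  finally show ?thesis .
qed

definition sq :: "nat \<Rightarrow> nat \<Rightarrow> nat \<Rightarrow> real" where
  "sq n a b = sqrt ((bet n a - bet n b)^2 + 4)"
definition lp :: "nat \<Rightarrow> nat \<Rightarrow> nat \<Rightarrow> real" where
  "lp n a b = (bet n a + bet n b + sq n a b) / 2"
definition lm :: "nat \<Rightarrow> nat \<Rightarrow> nat \<Rightarrow> real" where
  "lm n a b = (bet n a + bet n b - sq n a b) / 2"

definition ia :: "nat \<Rightarrow> nat \<Rightarrow> nat" where "ia n u = (u mod (n*n)) div n"
definition ib :: "nat \<Rightarrow> nat \<Rightarrow> nat" where "ib n u = u mod n"

definition lam :: "nat \<Rightarrow> nat \<Rightarrow> real" where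
  "lam n u = (if u < n*n then lp n (ia n u) (ib n u) else lm n (ia n u) (ib n u))"

lemma sq_pos: "sq n a b > 0" unfolding sq_def by (simp add: add_nonneg_pos)

lemma sq_sq: "(sq n a b)^2 = (bet n a - bet n b)^2 + 4"
  unfolding sq_def by (simp add: add_nonneg_pos)

lemma lp_lm: "lp n a b - lm n a b = sq n a b" unfolding lp_def lm_def by (simp add: field_simps)

lemma root_gen: assumes "l = (A + B + s)/2 \<or> l = (A + B - s)/2" "s^2 = (A - B)^2 + 4"
  shows "(l - A) * (l - B) = (1::real)"
proof -
  have m: "4*((l-A)*(l-B)) = (2*l-2*A)*(2*l-2*B)" by (simp add: algebra_simps)
  have k1: "(s + (B-A))*(s-(B-A)) = s^2 - (A-B)^2" by (simp add: algebra_simps power2_eq_square)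
  have k2: "(-s + (B-A))*(-s-(B-A)) = s^2 - (A-B)^2" by (simp add: algebra_simps power2_eq_square)
  from assms(1) have "2*l = A+B+s \<or> 2*l = A+B-s" by auto
  then have "4*((l-A)*(l-B)) = s^2 - (A-B)^2"
  proof
    assume h: "2*l = A+B+s"
    have e: "2*l-2*A = s + (B-A)" "2*l-2*B = s-(B-A)" using h by simp_all
    show ?thesis unfolding m e by (rule k1)
  next
    assume h: "2*l = A+B-s"
    have e: "2*l-2*A = -s + (B-A)" "2*l-2*B = -s-(B-A)" using h by simp_all
    show ?thesis unfolding m e by (rule k2)
  qed
  then show ?thesis using assms(2) by simp
qed

lemma lp_root: "(lp n a b - bet n a) * (lp n a b - bet n b) = 1"
  by (rule root_gen[OF _ sq_sq]) (simp add: lp_def)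
lemma lm_root: "(lm n a b - bet n a) * (lm n a b - bet n b) = 1"
  by (rule root_gen[OF _ sq_sq]) (simp add: lm_def)

lemma lam_root: "(lam n u - bet n (ia n u)) * (lam n u - bet n (ib n u)) = 1"
  unfolding lam_def using lp_root lm_root by simp

lemma ia_lt: "n > 0 \<Longrightarrow> ia n u < n"
  unfolding ia_def by (simp add: less_mult_imp_div_less)
lemma ib_lt: "n > 0 \<Longrightarrow> ib n u < n"
  unfolding ib_def by simp

lemma idx_eq: fixes n u u' :: nat assumes "u < 2*n*n" "u' < 2*n*n"
  shows "u = u' \<longleftrightarrow> ia n u = ia n u' \<and> ib n u = ib n u' \<and> (u < n*n \<longleftrightarrow> u' < n*n)"
proof
  assume h: "ia n u = ia n u' \<and> ib n u = ib n u' \<and> (u < n*n \<longleftrightarrow> u' < n*n)"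
  have n0: "n > 0" using assms by (cases n) auto
  have mm: "u mod n = u mod (n*n) mod n" for u by (simp add: mod_mult2_eq)
  have "u mod (n*n) = ia n u * n + ib n u" for u
    unfolding ia_def ib_def mm[of u] by simp
  then have e1: "u mod (n*n) = u' mod (n*n)" using h by simp
  have r: "u = (if u < n*n then u mod (n*n) else u mod (n*n) + n*n)" if "u < 2*n*n" for u
  proof (cases "u < n*n")
    case False
    then have "u mod (n*n) = (u - n*n) mod (n*n)" by (simp add: le_mod_geq)
    also have "\<dots> = u - n*n" using that False by simp
    finally show ?thesis using False by simp
  qed simp
  show "u = u'"
  proof (cases "u < n*n")
    case True
    then have "u' < n*n" using h by simp
    then show ?thesis using True r[OF assms(1)] r[OF assms(2)] e1 by simp
  next
    case False
    then have "\<not> u' < n*n" using h by simp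
    then show ?thesis using False r[OF assms(1)] r[OF assms(2)] e1 by simp
  qed
qed simp


definition Pm :: "nat \<Rightarrow> complex mat" where
  "Pm n = mat (2*n*n) (2*n*n) (\<lambda>(v,u). Pcol n (ia n u) (ib n u) (lam n u) v)"
definition Dm :: "nat \<Rightarrow> complex mat" where
  "Dm n = mat (2*n*n) (2*n*n) (\<lambda>(i,j). if i = j then complex_of_real (lam n i) else 0)"
definition Ac :: "nat \<Rightarrow> complex mat" where
  "Ac n = map_mat complex_of_real (T_adjacency_matrix n)"

lemma Ac_carrier: "Ac n \<in> carrier_mat (2*n*n) (2*n*n)"
  unfolding Ac_def T_adjacency_matrix_def by simp
lemma Pm_carrier: "Pm n \<in> carrier_mat (2*n*n) (2*n*n)"
  unfolding Pm_def by simp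
lemma Dm_carrier: "Dm n \<in> carrier_mat (2*n*n) (2*n*n)"
  unfolding Dm_def by simp

lemma AP: assumes n: "n \<ge> 3" shows "Ac n * Pm n = Pm n * Dm n"
proof (rule eq_matI)
  fix v u assume v: "v < dim_row (Pm n * Dm n)" and u: "u < dim_col (Pm n * Dm n)"
  then have v': "v < 2*n*n" and u': "u < 2*n*n" by (simp_all add: Pm_def Dm_def)
  have n0: "n > 0" using n by simp
  have "(Ac n * Pm n) $$ (v,u) = (\<Sum>k\<in>{0..<2*n*n}. Ac n $$ (v,k) * Pm n $$ (k,u))"
    using v' u' Ac_carrier[of n] Pm_carrier[of n] by (simp add: scalar_prod_def)
  also have "\<dots> = (\<Sum>k<2*n*n. if T_adj n v k then Pcol n (ia n u) (ib n u) (lam n u) k else 0)"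
    unfolding atLeast0LessThan
    by (rule sum.cong) (use v' u' in \<open>auto simp: Ac_def T_adjacency_matrix_def Pm_def\<close>)
  also have "\<dots> = complex_of_real (lam n u) * Pcol n (ia n u) (ib n u) (lam n u) v"
    by (rule eigen_Pcol[OF n ia_lt[OF n0] ib_lt[OF n0] lam_root v'])
  also have "\<dots> = (Pm n * Dm n) $$ (v,u)"
  proof -
    have "(Pm n * Dm n) $$ (v,u) = (\<Sum>k\<in>{0..<2*n*n}. Pm n $$ (v,k) * Dm n $$ (k,u))"
      using v' u' Dm_carrier[of n] Pm_carrier[of n] by (simp add: scalar_prod_def)
    also have "\<dots> = (\<Sum>k\<in>{0..<2*n*n}. if k = u then Pm n $$ (v,u) * complex_of_real (lam n u) else 0)"
      by (rule sum.cong) (use v' u' in \<open>auto simp: Dm_def\<close>)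
    also have "\<dots> = Pm n $$ (v,u) * complex_of_real (lam n u)" using u' by simp
    finally show ?thesis using u' v' by (simp add: Pm_def)
  qed
  finally show "(Ac n * Pm n) $$ (v,u) = (Pm n * Dm n) $$ (v,u)" .
qed (simp_all add: Ac_def T_adjacency_matrix_def Pm_def Dm_def)


definition qxr :: "nat \<Rightarrow> nat \<Rightarrow> real" where
  "qxr n u = (let a = ia n u; b = ib n u in
     if u < n*n then - (lm n a b - bet n b) / (real (n*n) * sq n a b)
     else (lp n a b - bet n b) / (real (n*n) * sq n a b))"
definition qyr :: "nat \<Rightarrow> nat \<Rightarrow> real" where
  "qyr n u = (let a = ia n u; b = ib n u in
     if u < n*n then 1 / (real (n*n) * sq n a b) else - 1 / (real (n*n) * sq n a b))"

definition Qm :: "nat \<Rightarrow> complex mat" where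
  "Qm n = mat (2*n*n) (2*n*n) (\<lambda>(u,v). Qrow n (ia n u) (ib n u) (complex_of_real (qxr n u)) (complex_of_real (qyr n u)) v)"

lemma Qm_carrier: "Qm n \<in> carrier_mat (2*n*n) (2*n*n)"
  unfolding Qm_def by simp

lemma real_coef: assumes "(N::real) > 0" "s > 0"
  shows "N * (x/(N*s) + y/(N*s)*z) = (x + y*z)/s"
  using assms by (simp add: field_simps)

lemma coef: assumes n0: "n > 0" and u: "u < 2*n*n" and u': "u' < 2*n*n"
  and same: "ia n u = ia n u'" "ib n u = ib n u'"
  shows "real (n*n) * (qxr n u + qyr n u * (lam n u' - bet n (ib n u))) = (if u = u' then 1 else 0)"
proof -
  let ?a = "ia n u" and ?b = "ib n u"
  let ?s = "sq n ?a ?b"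
  let ?N = "real (n*n)"
  let ?p = "lp n ?a ?b" and ?m = "lm n ?a ?b" and ?be = "bet n ?b"
  have s0: "?s > 0" by (rule sq_pos)
  have N0: "?N > 0" using n0 by simp
  have pm: "?p - ?m = ?s" by (rule lp_lm)
  have eq: "u = u' \<longleftrightarrow> (u < n*n \<longleftrightarrow> u' < n*n)" using idx_eq[OF u u'] same by simp
  have lam': "lam n u' = (if u' < n*n then ?p else ?m)" unfolding lam_def same ..
  define x where "x = (if u < n*n then - (?m - ?be) else ?p - ?be)"
  define y where "y = (if u < n*n then 1 else - (1::real))"
  have qx: "qxr n u = x / (?N * ?s)" unfolding qxr_def x_def Let_def by simp
  have qy: "qyr n u = y / (?N * ?s)" unfolding qyr_def y_def Let_def by simp
  have "x + y * (lam n u' - ?be) = (if u = u' then ?s else 0)"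
    unfolding x_def y_def lam' eq using pm by (auto simp: algebra_simps)
  then have "?N * (qxr n u + qyr n u * (lam n u' - ?be)) = (if u = u' then ?s else 0) / ?s"
    unfolding qx qy real_coef[OF N0 s0] by simp
  moreover have "(if u = u' then ?s else 0) / ?s = (if u = u' then 1 else 0)"
  proof (cases "u = u'")
    case True
    have "?s / ?s = 1" using s0 by simp
    then show ?thesis by (simp only: if_P[OF True])
  qed simp
  ultimately show ?thesis by simp
qed

lemma QP: assumes n: "n \<ge> 3" shows "Qm n * Pm n = 1\<^sub>m (2*n*n)"
proof (rule eq_matI)
  fix u u' assume u: "u < dim_row (1\<^sub>m (2*n*n) :: complex mat)" and u': "u' < dim_col (1\<^sub>m (2*n*n) :: complex mat)"
  then have u1: "u < 2*n*n" and u1': "u' < 2*n*n" by simp_all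
  have n0: "n > 0" using n by simp
  have "(Qm n * Pm n) $$ (u,u') = (\<Sum>k\<in>{0..<2*n*n}. Qm n $$ (u,k) * Pm n $$ (k,u'))"
    using u1 u1' Qm_carrier[of n] Pm_carrier[of n] by (simp add: scalar_prod_def)
  also have "\<dots> = (\<Sum>k<2*n*n. Qrow n (ia n u) (ib n u) (complex_of_real (qxr n u)) (complex_of_real (qyr n u)) k
       * Pcol n (ia n u') (ib n u') (lam n u') k)"
    unfolding atLeast0LessThan
    by (rule sum.cong) (use u1 u1' in \<open>auto simp: Qm_def Pm_def\<close>)
  also have "\<dots> = (if ia n u = ia n u' \<and> ib n u = ib n u' then of_nat (n*n) *
      (complex_of_real (qxr n u) + complex_of_real (qyr n u) * complex_of_real (lam n u' - bet n (ib n u))) else 0)"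
    by (rule orth[OF n0 ia_lt[OF n0] ib_lt[OF n0] ia_lt[OF n0] ib_lt[OF n0]])
  also have "\<dots> = (if u = u' then 1 else 0)"
  proof (cases "ia n u = ia n u' \<and> ib n u = ib n u'")
    case True
    have "of_nat (n*n) * (complex_of_real (qxr n u) + complex_of_real (qyr n u) * complex_of_real (lam n u' - bet n (ib n u)))
      = complex_of_real (real (n*n) * (qxr n u + qyr n u * (lam n u' - bet n (ib n u))))" by simp
    also have "\<dots> = (if u = u' then 1 else 0)" using coef[OF n0 u1 u1'] True by simp
    finally show ?thesis using True by simp
  next
    case False
    then have "u \<noteq> u'" by auto
    then show ?thesis by (simp only: if_not_P[OF False] if_not_P[OF \<open>u \<noteq> u'\<close>] if_False)
  qed
  also have "\<dots> = 1\<^sub>m (2*n*n) $$ (u,u')" using u1 u1' by simp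
  finally show "(Qm n * Pm n) $$ (u,u') = 1\<^sub>m (2*n*n) $$ (u,u')" .
qed (simp_all add: Qm_def Pm_def)


interpretation ofr: map_poly_inj_idom_divide_hom "of_real :: real \<Rightarrow> complex"
  by unfold_locales (simp_all add: of_real_divide)

lemma similar_AD: assumes n: "n \<ge> 3" shows "similar_mat (Ac n) (Dm n)"
proof -
  let ?N = "2*n*n"
  have PQ: "Pm n * Qm n = 1\<^sub>m ?N"
    by (rule mat_mult_left_right_inverse[OF Qm_carrier Pm_carrier QP[OF n]])
  have "Pm n * Dm n * Qm n = Ac n * Pm n * Qm n" unfolding AP[OF n] ..
  also have "\<dots> = Ac n * (Pm n * Qm n)"
    by (rule assoc_mult_mat[OF Ac_carrier Pm_carrier Qm_carrier])
  also have "\<dots> = Ac n" unfolding PQ using Ac_carrier[of n] by simp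
  finally show ?thesis
    by (intro similar_matI[of _ _ "Pm n" "Qm n" ?N]) (use PQ QP[OF n] Ac_carrier Dm_carrier Pm_carrier Qm_carrier in auto)
qed

lemma char_poly_Dm: "char_poly (Dm n) = (\<Prod>i\<leftarrow>[0..<2*n*n]. [:- complex_of_real (lam n i), 1:])"
proof -
  have ut: "upper_triangular (Dm n)" unfolding upper_triangular_def Dm_def by auto
  have "diag_mat (Dm n) = map (\<lambda>i. complex_of_real (lam n i)) [0..<2*n*n]"
    unfolding diag_mat_def Dm_def by auto
  then show ?thesis unfolding char_poly_upper_triangular[OF Dm_carrier ut] by (simp add: o_def)
qed

lemma order_count: assumes n: "n \<ge> 3"
  shows "eigenvalue_multiplicity (T_adjacency_matrix n) 1 = card {i. i < 2*n*n \<and> lam n i = 1}"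
proof -
  have carr: "T_adjacency_matrix n \<in> carrier_mat (2*n*n) (2*n*n)" unfolding T_adjacency_matrix_def by simp
  have "eigenvalue_multiplicity (T_adjacency_matrix n) 1 =
      order (complex_of_real 1) (map_poly complex_of_real (char_poly (T_adjacency_matrix n)))"
    unfolding eigenvalue_multiplicity_def ofr.order_hom ..
  also have "map_poly complex_of_real (char_poly (T_adjacency_matrix n)) = char_poly (Ac n)"
    unfolding Ac_def by (rule of_real_hom.char_poly_hom[OF carr, symmetric])
  also have "\<dots> = char_poly (Dm n)" by (rule char_poly_similar[OF similar_AD[OF n]])
  also have "order (complex_of_real 1) (char_poly (Dm n)) =
      sum_list (map (\<lambda>i. if lam n i = 1 then 1 else 0) [0..<2*n*n])"
    unfolding char_poly_Dm by (subst order_prod_list) (auto simp: o_def order_linear')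
  also have "\<dots> = (\<Sum>i\<in>{0..<2*n*n}. if lam n i = 1 then 1 else 0)"
    by (simp add: sum_set_upt_conv_sum_list_nat[symmetric])
  also have "\<dots> = card {i. i < 2*n*n \<and> lam n i = 1}"
    by (simp add: sum.If_cases atLeast0LessThan Int_def conj_commute)
  finally show ?thesis .
qed


lemma ia_Tp: "a < n \<Longrightarrow> b < n \<Longrightarrow> ia n (Tp n a b) = a"
  unfolding ia_def using Tp_lt[of a n b] Tp_div[of b n a] by simp
lemma ib_Tp: "b < n \<Longrightarrow> ib n (Tp n a b) = b"
  unfolding ib_def using Tp_mod[of b n a] by simp
lemma ia_Tn: "a < n \<Longrightarrow> b < n \<Longrightarrow> ia n (Tn n a b) = a"
  unfolding ia_def Tn_eq using Tp_lt[of a n b] Tp_div[of b n a] by simp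
lemma ib_Tn: "b < n \<Longrightarrow> ib n (Tn n a b) = b"
  unfolding ib_def Tn_eq using Tp_mod[of b n a] by simp

lemma lam_Tp: "a < n \<Longrightarrow> b < n \<Longrightarrow> lam n (Tp n a b) = lp n a b"
  unfolding lam_def using Tp_lt[of a n b] ia_Tp ib_Tp by simp
lemma lam_Tn: "a < n \<Longrightarrow> b < n \<Longrightarrow> lam n (Tn n a b) = lm n a b"
  unfolding lam_def Tn_eq using ia_Tn[of a n b] ib_Tn[of b n a] unfolding Tn_eq by simp

lemma lp_gt_lm: "lp n a b > lm n a b" using lp_lm[of n a b] sq_pos[of n a b] by simp

lemma prod_one: "(1 - lp n a b) * (1 - lm n a b) = bet n a * bet n b - bet n a - bet n b"
proof -
  let ?A = "bet n a" and ?B = "bet n b" and ?s = "sq n a b"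
  have "(1 - lp n a b) * (1 - lm n a b) = ((2 - ?A - ?B)^2 - ?s^2) / 4"
    unfolding lp_def lm_def by (simp add: field_simps power2_eq_square)
  also have "\<dots> = ?A * ?B - ?A - ?B" unfolding sq_sq by (simp add: field_simps power2_eq_square)
  finally show ?thesis .
qed

lemma cond_iff: "lp n a b = 1 \<or> lm n a b = 1 \<longleftrightarrow>
  cos (2 * pi * real a / real n) + cos (2 * pi * real b / real n) =
      2 * cos (2 * pi * real a / real n) * cos (2 * pi * real b / real n)"
proof -
  have "lp n a b = 1 \<or> lm n a b = 1 \<longleftrightarrow> (1 - lp n a b) * (1 - lm n a b) = 0" by auto
  also have "\<dots> \<longleftrightarrow> bet n a * bet n b - bet n a - bet n b = 0" unfolding prod_one ..
  also have "\<dots> \<longleftrightarrow> cos (2 * pi * real a / real n) + cos (2 * pi * real b / real n) =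
      2 * cos (2 * pi * real a / real n) * cos (2 * pi * real b / real n)"
    unfolding bet_def by (auto simp: algebra_simps)
  finally show ?thesis .
qed

lemma count: assumes n: "n \<ge> 3"
  shows "card {i. i < 2*n*n \<and> lam n i = 1} = card {(j, l). j < n \<and> l < n \<and>
      cos (2 * pi * real j / real n) + cos (2 * pi * real l / real n) =
      2 * cos (2 * pi * real j / real n) * cos (2 * pi * real l / real n)}"
proof -
  let ?S = "{(j, l). j < n \<and> l < n \<and>
      cos (2 * pi * real j / real n) + cos (2 * pi * real l / real n) =
      2 * cos (2 * pi * real j / real n) * cos (2 * pi * real l / real n)}"
  let ?T = "{i. i < 2*n*n \<and> lam n i = 1}"
  define f where "f = (\<lambda>(a,b). if lp n a b = 1 then Tp n a b else Tn n a b)"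
  have S: "?S = {(a,b). a < n \<and> b < n \<and> (lp n a b = 1 \<or> lm n a b = 1)}" unfolding cond_iff ..
  have "bij_betw f ?S ?T"
  proof (rule bij_betw_imageI)
    show "inj_on f ?S"
    proof (rule inj_onI)
      fix x y assume "x \<in> ?S" "y \<in> ?S" "f x = f y"
      then obtain a b a' b' where x: "x = (a,b)" "a < n" "b < n" and y: "y = (a',b')" "a' < n" "b' < n"
        and e: "f (a,b) = f (a',b')" by auto
      show "x = y"
      proof (cases "lp n a b = 1"; cases "lp n a' b' = 1")
        assume "lp n a b = 1" "lp n a' b' = 1"
        then show ?thesis using e x y Tp_inj[of b n b' a a'] unfolding f_def by simp
      next
        assume "lp n a b = 1" "lp n a' b' \<noteq> 1"
        then show ?thesis using e x y Tp_ne_Tn[of a n b a' b'] unfolding f_def by simp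
      next
        assume "lp n a b \<noteq> 1" "lp n a' b' = 1"
        then show ?thesis using e x y Tp_ne_Tn[of a' n b' a b] unfolding f_def by simp
      next
        assume "lp n a b \<noteq> 1" "lp n a' b' \<noteq> 1"
        then show ?thesis using e x y Tn_inj[of b n b' a a'] unfolding f_def by simp
      qed
    qed
  next
    show "f ` ?S = ?T"
    proof
      show "f ` ?S \<subseteq> ?T"
      proof
        fix i assume "i \<in> f ` ?S"
        then obtain x where x: "x \<in> ?S" "i = f x" by blast
        obtain a b where xab: "x = (a,b)" by (cases x)
        have "(a,b) \<in> {(a,b). a < n \<and> b < n \<and> (lp n a b = 1 \<or> lm n a b = 1)}"
          using x(1) unfolding S xab .
        then have ab: "a < n" "b < n" "lp n a b = 1 \<or> lm n a b = 1" by simp_all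
        have i: "i = f (a,b)" using x(2) xab by simp
        show "i \<in> ?T"
        proof (cases "lp n a b = 1")
          case True
          then have "i = Tp n a b" unfolding i f_def by simp
          then show ?thesis using True ab Tp_lt2[of a n b] lam_Tp[of a n b] by simp
        next
          case False
          then have "i = Tn n a b" unfolding i f_def by simp
          then show ?thesis using False ab Tn_lt2[of a n b] lam_Tn[of a n b] by simp
        qed
      qed
    next
      show "?T \<subseteq> f ` ?S"
      proof
        fix i assume iT: "i \<in> ?T"
        then have i: "i < 2*n*n" "lam n i = 1" by auto
        from i(1) show "i \<in> f ` ?S"
        proof (cases rule: decomp)
          case (1 a b)
          then have lp1: "lp n a b = 1" using i lam_Tp by simp
          have "(a,b) \<in> {(a,b). a < n \<and> b < n \<and> (lp n a b = 1 \<or> lm n a b = 1)}"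
            using 1 lp1 by simp
          then have "(a,b) \<in> ?S" unfolding S .
          moreover have "i = f (a,b)" unfolding f_def using 1 lp1 by simp
          ultimately show ?thesis by (rule image_eqI[rotated])
        next
          case (2 a b)
          then have lm1: "lm n a b = 1" using i lam_Tn by simp
          then have lp1: "lp n a b \<noteq> 1" using lp_gt_lm[of n a b] by simp
          have "(a,b) \<in> {(a,b). a < n \<and> b < n \<and> (lp n a b = 1 \<or> lm n a b = 1)}"
            using 2 lm1 by simp
          then have "(a,b) \<in> ?S" unfolding S .
          moreover have "i = f (a,b)" unfolding f_def using 2 lp1 by simp
          ultimately show ?thesis by (rule image_eqI[rotated])
        qed
      qed
    qed
  qed
  then show ?thesis by (simp add: bij_betw_same_card)
qed

theorem corollary6p10:
  fixes m :: nat
  assumes "m \<ge> 3"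
  shows "eigenvalue_multiplicity (T_adjacency_matrix m) 1 =
    card {(j, l). j < m \<and> l < m \<and>
      cos (2 * pi * real j / real m) + cos (2 * pi * real l / real m) =
      2 * cos (2 * pi * real j / real m) * cos (2 * pi * real l / real m)}"
  using order_count[OF assms] count[OF assms] by simp


end
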